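(* Let $\lambda_1\in\mathbb{R}$ with $0<|\lambda_1|<1$ and $h\in\mathbb{R}_{>0}$. Consider the system $x[k+1]=Ax[k]+w[k]$ with $A=\mathrm{diag}(\lambda_1,0,0)$, $W=I_{3\times3}$, and three candidate sensors with scalar measurements $y_i[k]=C_ix[k]+v_i[k]$, where $C_1=[1\ h\ h]$, $C_2=[1\ 0\ h]$, $C_3=[0\ 1\ 1]$, and measurement noise covariance $V=\mathbf{0}_{3\times3}$. Each sensor has cost $1$ and the budget is $2$. Let $\Sigma_{opt}=\Sigma(\mu^* )$ where $\mu^*$ minimizes $\mathrm{trace}(\Sigma(\mu))$ over all $\mu\in\{0,1\}^3$ with $\mu_1+\mu_2+\mu_3\le 2$, and let $\Sigma_{gre}$ be $\Sigma(\mu)$ for the selection produced by the greedy algorithm with budget $p_s=2$. Then $r_{gre}(\Sigma)=\mathrm{trace}(\Sigma_{gre})/\mathrm{trace}(\Sigma_{opt})$ satisfies $$\lim_{h\to\infty} r_{gre}(\Sigma)=\frac{2}{3}+\frac{1}{3(1-\lambda_1^2)}.$$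
   Context: For a selection $\mu\in\{0,1\}^3$, $C(\mu)$ stacks the rows $C_i$ with $\mu_i=1$, and $V(\mu)=\mathbf{0}$. Since $A$ is stable, $\Sigma(\mu)$ is the limit as $k\to\infty$ of the a priori error covariance $\Sigma_{k|k-1}(\mu)$ of the Kalman filter using the selected sensors; it satisfies $\Sigma(\mu)=A\Sigma(\mu)A^T+W-A\Sigma(\mu)C(\mu)^T(C(\mu)\Sigma(\mu)C(\mu)^T)^{-1}C(\mu)\Sigma(\mu)A^T$, with the inverse interpreted as a pseudo-inverse when singular. The greedy algorithm with budget $p_s$ starts with $\mathcal{S}=\emptyset$ and, for $p_s$ iterations, adds to $\mathcal{S}$ a sensor $j\notin\mathcal{S}$ minimizing $\mathrm{trace}(\Sigma(\mathcal{S}\cup\{j\}))$, where $\Sigma(\mathcal{S})$ denotes $\Sigma(\mu)$ for the indicator vector $\mu$ of $\mathcal{S}$. *)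

theory Defs
  imports "HOL-Analysis.Analysis"
begin

definition pinv :: "real^'n^'n \<Rightarrow> real^'n^'n" where
  "pinv M = (THE X. M ** X ** M = M \<and> X ** M ** X = X \<and>
                    transpose (M ** X) = M ** X \<and> transpose (X ** M) = X ** M)"

definition psd :: "real^'n^'n \<Rightarrow> bool" where
  "psd P \<longleftrightarrow> transpose P = P \<and> (\<forall>x. 0 \<le> x \<bullet> (P *v x))"

(* one step of the a priori covariance recursion of the Kalman filter with V = 0:
   Sigma_{k+1|k} = A S A^T + W - A S C^T (C S C^T)^+ C S A^T *)
definition riccati :: "real^'n^'n \<Rightarrow> real^'n^'n \<Rightarrow> real^'n^'m \<Rightarrow> real^'n^'n \<Rightarrow> real^'n^'n" where
  "riccati A W C S = A ** S ** transpose A + W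
     - A ** S ** transpose C ** pinv (C ** S ** transpose C) ** C ** S ** transpose A"

fun kf_cov :: "real^'n^'n \<Rightarrow> real^'n^'n \<Rightarrow> real^'n^'m \<Rightarrow> real^'n^'n \<Rightarrow> nat \<Rightarrow> real^'n^'n" where
  "kf_cov A W C P0 0 = P0"
| "kf_cov A W C P0 (Suc k) = riccati A W C (kf_cov A W C P0 k)"

definition kf_lim :: "real^'n^'n \<Rightarrow> real^'n^'n \<Rightarrow> real^'n^'m \<Rightarrow> real^'n^'n" where
  "kf_lim A W C = (THE L. \<forall>P0. psd P0 \<longrightarrow> (kf_cov A W C P0 \<longlonglongrightarrow> L))"

definition Aex :: "real \<Rightarrow> real^3^3" where
  "Aex l1 = (\<chi> i j. if i = 1 \<and> j = 1 then l1 else 0)"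

definition Cfull :: "real \<Rightarrow> real^3^3" where
  "Cfull h = vector [vector [1, h, h], vector [1, 0, h], vector [0, 1, 1]]"

(* C(mu) for the selection S (the set of sensors i with mu_i = 1), represented as a
   3x3 matrix whose unselected rows are zero *)
definition Csel :: "real \<Rightarrow> 3 set \<Rightarrow> real^3^3" where
  "Csel h S = (\<chi> i j. if i \<in> S then Cfull h $ i $ j else 0)"

definition Sig :: "real \<Rightarrow> real \<Rightarrow> 3 set \<Rightarrow> real^3^3" where
  "Sig l1 h S = kf_lim (Aex l1) (mat 1) (Csel h S)"

(* possible outputs of the greedy algorithm (any tie-breaking) after n iterations,
   for a cost function f on sensor sets *)
inductive greedy_res :: "(3 set \<Rightarrow> real) \<Rightarrow> nat \<Rightarrow> 3 set \<Rightarrow> bool" for f where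
  "greedy_res f 0 {}"
| "greedy_res f n S \<Longrightarrow> j \<notin> S \<Longrightarrow> (\<forall>j'. j' \<notin> S \<longrightarrow> f (insert j S) \<le> f (insert j' S))
     \<Longrightarrow> greedy_res f (Suc n) (insert j S)"

end

theory Submission
  imports Defs
begin

lemma mm_add_r: "((A::real^'n^'m) + B) ** C = A ** C + B ** C"
  by (simp add: matrix_matrix_mult_def vec_eq_iff sum.distrib distrib_right)
lemma mm_diff_r: "((A::real^'n^'m) - B) ** C = A ** C - B ** C"
  by (simp add: matrix_matrix_mult_def vec_eq_iff sum_subtractf left_diff_distrib)
lemma mm_diff_l: "(A::real^'n^'m) ** (B - C) = A ** B - A ** C"
  by (simp add: matrix_matrix_mult_def vec_eq_iff sum_subtractf right_diff_distrib)
lemma mm_scale_l: "(k *\<^sub>R (A::real^'n^'m)) ** B = k *\<^sub>R (A ** B)"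
  by (simp add: scalar_matrix_assoc)
lemma mm_scale_r: "(A::real^'n^'m) ** (k *\<^sub>R B) = k *\<^sub>R (A ** B)"
  by (simp add: matrix_scalar_ac scalar_matrix_assoc)
lemma tr_add: "transpose ((A::real^'n^'m) + B) = transpose A + transpose B"
  by (simp add: transpose_def vec_eq_iff)
lemma tr_diff: "transpose ((A::real^'n^'m) - B) = transpose A - transpose B"
  by (simp add: transpose_def vec_eq_iff)

definition penrose :: "real^'n^'n \<Rightarrow> real^'n^'n \<Rightarrow> bool" where
  "penrose M X \<longleftrightarrow> M ** X ** M = M \<and> X ** M ** X = X \<and>
                    transpose (M ** X) = M ** X \<and> transpose (X ** M) = X ** M"

lemma penrose_unique:
  assumes "penrose M X" "penrose M Y" shows "X = Y"
proof -
  have X1: "M ** X ** M = M" and X2: "X ** M ** X = X" and X3: "transpose (M ** X) = M ** X"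
    and X4: "transpose (X ** M) = X ** M" using assms(1) unfolding penrose_def by auto
  have Y1: "M ** Y ** M = M" and Y2: "Y ** M ** Y = Y" and Y3: "transpose (M ** Y) = M ** Y"
    and Y4: "transpose (Y ** M) = Y ** M" using assms(2) unfolding penrose_def by auto
  have "X = X ** (M ** X)" using X2 by (simp add: matrix_mul_assoc)
  also have "\<dots> = X ** transpose X ** transpose M" using X3
    by (metis matrix_mul_assoc matrix_transpose_mul)
  also have "transpose M = transpose M ** transpose Y ** transpose M"
    using Y1 by (metis matrix_transpose_mul matrix_mul_assoc)
  also have "X ** transpose X ** (transpose M ** transpose Y ** transpose M)
     = X ** (transpose (M ** X)) ** (transpose (M ** Y))"
    by (simp add: matrix_transpose_mul matrix_mul_assoc)
  also have "\<dots> = X ** M ** X ** M ** Y" using X3 Y3 by (simp add: matrix_mul_assoc)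
  also have "\<dots> = X ** M ** Y" using X2 by simp
  finally have eX: "X = X ** M ** Y" .
  have "Y = (Y ** M) ** Y" using Y2 by (simp add: matrix_mul_assoc)
  also have "\<dots> = transpose M ** transpose Y ** Y" using Y4
    by (metis matrix_transpose_mul)
  also have "transpose M = transpose M ** transpose X ** transpose M"
    using X1 by (metis matrix_transpose_mul matrix_mul_assoc)
  also have "(transpose M ** transpose X ** transpose M) ** transpose Y ** Y
     = (transpose (X ** M)) ** (transpose (Y ** M)) ** Y"
    by (simp add: matrix_transpose_mul matrix_mul_assoc)
  also have "\<dots> = X ** M ** (Y ** M ** Y)" using X4 Y4 by (simp add: matrix_mul_assoc)
  also have "\<dots> = X ** M ** Y" using Y2 by simp
  finally show ?thesis using eX by simp
qed

lemma pinv_eq: "penrose M X \<Longrightarrow> pinv M = X"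
  unfolding pinv_def
  by (rule the_equality) (auto simp: penrose_def[symmetric] intro: penrose_unique)

lemma CH3:
  fixes M :: "real^3^3"
  defines "t \<equiv> M$1$1 + M$2$2 + M$3$3"
    and "s \<equiv> M$1$1*M$2$2 - M$1$2*M$2$1 + M$1$1*M$3$3 - M$1$3*M$3$1 + M$2$2*M$3$3 - M$2$3*M$3$2"
    and "d \<equiv> M$1$1*(M$2$2*M$3$3 - M$2$3*M$3$2) - M$1$2*(M$2$1*M$3$3 - M$2$3*M$3$1)
              + M$1$3*(M$2$1*M$3$2 - M$2$2*M$3$1)"
  shows "M ** M ** M = t *\<^sub>R (M ** M) - s *\<^sub>R M + d *\<^sub>R mat 1"
  unfolding t_def s_def d_def
  by (simp add: vec_eq_iff forall_3 matrix_matrix_mult_def sum_3 mat_def) algebra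

lemma sym_sq_zero:
  fixes N :: "real^'n^'n"
  assumes "transpose N = N" "N ** N = 0" shows "N = 0"
proof -
  have sy: "N$k$i = N$i$k" for i k using assms(1) by (metis transpose_def vec_lambda_beta)
  have "\<forall>i k. N$i$k = 0"
  proof (intro allI)
    fix i k
    have "(N ** N)$i$i = (\<Sum>k\<in>UNIV. (N$i$k)^2)"
      by (simp add: matrix_matrix_mult_def sy power2_eq_square)
    hence "(\<Sum>k\<in>UNIV. (N$i$k)^2) = 0" using assms(2) by simp
    hence "\<forall>k\<in>UNIV. (N$i$k)^2 = 0" by (subst (asm) sum_nonneg_eq_0_iff) auto
    thus "N$i$k = 0" by simp
  qed
  thus ?thesis by (simp add: vec_eq_iff)
qed

lemma tr_Q: "transpose (M::real^'n^'n) = M \<Longrightarrow> transpose (M ** M) = M ** M"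
  by (simp add: matrix_transpose_mul)

lemma pinv_exists3:
  fixes M :: "real^3^3"
  assumes sym: "transpose M = M"
  shows "\<exists>X. penrose M X \<and> transpose X = X"
proof -
  define t where "t \<equiv> M$1$1 + M$2$2 + M$3$3"
  define s where "s \<equiv> M$1$1*M$2$2 - M$1$2*M$2$1 + M$1$1*M$3$3 - M$1$3*M$3$1 + M$2$2*M$3$3 - M$2$3*M$3$2"
  define d where "d \<equiv> M$1$1*(M$2$2*M$3$3 - M$2$3*M$3$2) - M$1$2*(M$2$1*M$3$3 - M$2$3*M$3$1)
              + M$1$3*(M$2$1*M$3$2 - M$2$2*M$3$1)"
  define Q where "Q = M ** M"
  have CH: "Q ** M = t *\<^sub>R Q - s *\<^sub>R M + d *\<^sub>R mat 1"
    unfolding Q_def t_def s_def d_def by (rule CH3)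
  have MQ: "M ** Q = Q ** M" unfolding Q_def by (simp add: matrix_mul_assoc)
  have sQ: "transpose Q = Q" unfolding Q_def using sym by (rule tr_Q)
  show ?thesis
  proof (cases "d = 0")
    case False
    define X where "X = (1/d) *\<^sub>R (Q - t *\<^sub>R M + s *\<^sub>R mat 1)"
    have MX: "M ** X = mat 1" unfolding X_def
      using False by (simp add: mm_scale_r mm_diff_l matrix_add_ldistrib MQ CH Q_def[symmetric] algebra_simps)
    have XM: "X ** M = mat 1" unfolding X_def
      using False by (simp add: mm_scale_l mm_diff_r mm_add_r CH Q_def[symmetric] algebra_simps)
    have "penrose M X" unfolding penrose_def
      by (simp add: MX XM flip: matrix_mul_assoc)
    moreover have "transpose X = X" unfolding X_def
      by (simp add: transpose_scalar tr_add tr_diff sQ sym)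
    ultimately show ?thesis by blast
  next
    case d0: True
    show ?thesis
    proof (cases "s = 0")
      case False
      have CH': "Q ** M = t *\<^sub>R Q - s *\<^sub>R M" using CH d0 by simp
      define P where "P = (1/s) *\<^sub>R (t *\<^sub>R M - Q)"
      define X where "X = (1/s) *\<^sub>R (t *\<^sub>R P - M)"
      have MP: "M ** P = M" unfolding P_def using False
        by (simp add: mm_scale_r mm_diff_l MQ CH' Q_def[symmetric] algebra_simps)
      have PM: "P ** M = M" unfolding P_def using False
        by (simp add: mm_scale_l mm_diff_r CH' Q_def[symmetric] algebra_simps)
      have QP: "Q ** P = Q" unfolding Q_def by (simp add: MP flip: matrix_mul_assoc)
      have e: "((1/s) *\<^sub>R (t *\<^sub>R M - Q)) ** P = P"
        by (simp only: mm_scale_l mm_diff_r MP QP mm_scale_r) (simp add: P_def)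
      have PP: "P ** P = P" using e unfolding P_def by assumption
      have MX: "M ** X = P" unfolding X_def
        by (simp only: mm_scale_r mm_diff_l MP Q_def[symmetric]) (simp add: P_def)
      have XM: "X ** M = P" unfolding X_def
        by (simp only: mm_scale_l mm_diff_r PM Q_def[symmetric]) (simp add: P_def)
      have XP: "X ** P = X" unfolding X_def
        by (simp add: mm_scale_l mm_diff_r PP MP)
      have PX: "P ** X = X" unfolding X_def
        by (simp add: mm_scale_r mm_diff_l PP PM)
      have sP: "transpose P = P" unfolding P_def
        by (simp add: transpose_scalar tr_diff sQ sym)
      have "penrose M X" unfolding penrose_def
        by (simp add: MX XM PM XP PX sP flip: matrix_mul_assoc)
      moreover have "transpose X = X" unfolding X_def
        by (simp add: transpose_scalar tr_diff sP sym)
      ultimately show ?thesis by blast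
    next
      case s0: True
      have CH': "Q ** M = t *\<^sub>R Q" using CH d0 s0 by simp
      show ?thesis
      proof (cases "t = 0")
        case False
        define N where "N = Q - t *\<^sub>R M"
        have NM: "N ** M = 0" unfolding N_def
          by (simp add: mm_diff_r mm_scale_l CH' Q_def[symmetric])
        have e1: "N ** (Q - t *\<^sub>R M) = N ** Q - t *\<^sub>R (N ** M)" by (simp only: mm_diff_l mm_scale_r)
        have e2: "N ** Q = 0" unfolding Q_def by (simp add: matrix_mul_assoc NM)
        have e3: "N ** N = N ** (Q - t *\<^sub>R M)" by (simp only: N_def)
        have "N ** N = 0" by (simp only: e3 e1 e2 NM scale_zero_right diff_zero)
        moreover have "transpose N = N" unfolding N_def by (simp add: tr_diff transpose_scalar sQ sym)
        ultimately have "N = 0" by (rule sym_sq_zero[rotated])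
        hence QM: "Q = t *\<^sub>R M" unfolding N_def by simp
        define X where "X = (1/t^2) *\<^sub>R M"
        have MX: "M ** X = (1/t) *\<^sub>R M" unfolding X_def using False
          by (simp add: mm_scale_r Q_def[symmetric] QM power2_eq_square)
        have XM: "X ** M = (1/t) *\<^sub>R M" unfolding X_def using False
          by (simp add: mm_scale_l Q_def[symmetric] QM power2_eq_square)
        have "penrose M X" unfolding penrose_def using False
          by (simp add: MX XM mm_scale_l mm_scale_r Q_def[symmetric] QM X_def transpose_scalar sym power2_eq_square)
        moreover have "transpose X = X" unfolding X_def by (simp add: transpose_scalar sym)
        ultimately show ?thesis by blast
      next
        case t0: True
        have "Q ** Q = 0" using CH' t0 unfolding Q_def by (simp add: matrix_mul_assoc)
        hence "Q = 0" using sQ by (blast intro: sym_sq_zero)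
        hence "M = 0" using sym unfolding Q_def by (blast intro: sym_sq_zero)
        hence "penrose M 0 \<and> transpose (0::real^3^3) = 0"
          by (simp add: penrose_def transpose_def vec_eq_iff)
        thus ?thesis by blast
      qed
    qed
  qed
qed

definition diagm :: "real \<Rightarrow> real^3^3" where
  "diagm d = (\<chi> i j. if i = j then (if i = 1 then d else 1) else 0)"

lemma AXA: "Aex l ** X ** transpose (Aex l) = (\<chi> i j. if i = 1 \<and> j = 1 then l^2 * X$1$1 else 0)"
  by (simp add: vec_eq_iff forall_3 matrix_matrix_mult_def sum_3 Aex_def transpose_def power2_eq_square)

lemma riccati_form:
  fixes C :: "real^3^3"
  shows "riccati (Aex l) (mat 1) C P = diagm (1 + l^2 * ((P - P ** transpose C ** pinv (C ** P ** transpose C) ** C ** P)$1$1))"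
proof -
  let ?G = "pinv (C ** P ** transpose C)"
  let ?K = "P ** transpose C ** ?G ** C ** P"
  have e: "Aex l ** P ** transpose C ** ?G ** C ** P ** transpose (Aex l) = Aex l ** ?K ** transpose (Aex l)"
    by (simp only: matrix_mul_assoc)
  show ?thesis unfolding riccati_def e AXA
    by (simp add: vec_eq_iff forall_3 diagm_def mat_def algebra_simps)
qed

lemma psd_sym: "psd P \<Longrightarrow> transpose P = P" by (simp add: psd_def)

lemma quad11: "((B::real^3^3) ** P ** transpose B)$1$1 = (\<chi> k. B$1$k) \<bullet> (P *v (\<chi> k. B$1$k))"
  by (simp add: matrix_matrix_mult_def matrix_vector_mult_def inner_vec_def sum_3 transpose_def algebra_simps)

lemma gain_nonneg:
  fixes C P :: "real^3^3"
  assumes P: "psd P"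
  shows "0 \<le> (P - P ** transpose C ** pinv (C ** P ** transpose C) ** C ** P)$1$1"
proof -
  define M where "M = C ** P ** transpose C"
  have sP: "transpose P = P" using P by (simp add: psd_def)
  have sM: "transpose M = M" unfolding M_def by (simp add: matrix_transpose_mul sP matrix_mul_assoc)
  obtain X where X: "penrose M X" "transpose X = X" using pinv_exists3[OF sM] by blast
  define G where "G = pinv M"
  have GX: "G = X" unfolding G_def by (rule pinv_eq[OF X(1)])
  have sG: "transpose G = G" using GX X(2) by simp
  have GMG: "G ** M ** G = G" using X(1) GX by (simp add: penrose_def)
  have GMG': "Y ** G ** C ** P ** transpose C ** G = Y ** G" for Y :: "real^3^3"
    using arg_cong[OF GMG[unfolded M_def], of "\<lambda>Z. Y ** Z"] by (simp add: matrix_mul_assoc)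
  define Kp where "Kp = P ** transpose C ** G ** C"
  define K where "K = P ** transpose C ** G ** C ** P"
  have tKp: "transpose Kp = transpose C ** G ** C ** P"
    unfolding Kp_def by (simp add: matrix_transpose_mul sP sG matrix_mul_assoc)
  have e1: "P ** transpose Kp = K" unfolding tKp K_def by (simp add: matrix_mul_assoc)
  have e2: "Kp ** P = K" unfolding Kp_def K_def by simp
  have e3: "Kp ** P ** transpose Kp = K" unfolding tKp
    by (simp add: Kp_def K_def matrix_mul_assoc GMG')
  have "(mat 1 - Kp) ** P ** transpose (mat 1 - Kp) = P - K"
    using e3 by (simp add: mm_diff_r mm_diff_l tr_diff e1 e2)
  hence "(P - K)$1$1 = ((mat 1 - Kp) ** P ** transpose (mat 1 - Kp))$1$1" by simp
  also have "\<dots> = (\<chi> k. (mat 1 - Kp)$1$k) \<bullet> (P *v (\<chi> k. (mat 1 - Kp)$1$k))"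
    by (rule quad11)
  also have "\<dots> \<ge> 0" using P by (simp add: psd_def)
  finally show ?thesis unfolding K_def G_def M_def by simp
qed

definition Fval :: "real^3^3 \<Rightarrow> real \<Rightarrow> real" where
  "Fval C d = (diagm d - diagm d ** transpose C ** pinv (C ** diagm d ** transpose C) ** C ** diagm d)$1$1"

lemma Fval_by: "penrose (C ** diagm d ** transpose C) X \<Longrightarrow>
   Fval C d = (diagm d - diagm d ** transpose C ** X ** C ** diagm d)$1$1"
  unfolding Fval_def by (simp add: pinv_eq)

lemmas fvs = Csel_def Cfull_def penrose_def vec_eq_iff forall_3 matrix_matrix_mult_def sum_3 diagm_def transpose_def

lemma F0:
  shows "Fval (Csel h {}) d = d"
proof -
  have "penrose (Csel h {} ** diagm d ** transpose (Csel h {})) 0" by (simp add: fvs)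
  from Fval_by[OF this] show ?thesis by (simp add: fvs)
qed


lemma F3:
  shows "Fval (Csel h {3}) d = d"
proof -
  let ?X = "(\<chi> i j. if i = 3 \<and> j = 3 then 1/2 else 0) :: real^3^3"
  have "penrose (Csel h {3} ** diagm d ** transpose (Csel h {3})) ?X" by (simp add: fvs)
  from Fval_by[OF this] show ?thesis by (simp add: fvs)
qed


lemma F1:
  assumes "h > 0" "d \<ge> 1"
  shows "Fval (Csel h {1}) d = 2*h^2*d/(d + 2*h^2)"
proof -
  obtain e where e: "e = d + 2*(h*h)" by blast
  have e0: "e \<noteq> 0" using assms e by (smt (verit) zero_le_square)
  let ?X = "(\<chi> i j. if i = 1 \<and> j = 1 then 1/e else 0) :: real^3^3"
  have "penrose (Csel h {1} ** diagm d ** transpose (Csel h {1})) ?X"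
    using e0 by (simp add: fvs field_simps; simp add: e algebra_simps power2_eq_square; algebra)
  from Fval_by[OF this] have "Fval (Csel h {1}) d = 2*h^2*d/e"
    using e0 by (simp add: fvs field_simps; simp add: e algebra_simps power2_eq_square; algebra)
  thus ?thesis using e by (simp add: power2_eq_square)
qed


lemma F2:
  assumes "h > 0" "d \<ge> 1"
  shows "Fval (Csel h {2}) d = h^2*d/(d + h^2)"
proof -
  obtain e where e: "e = d + (h*h)" by blast
  have e0: "e \<noteq> 0" using assms e by (smt (verit) zero_le_square)
  let ?X = "(\<chi> i j. if i = 2 \<and> j = 2 then 1/e else 0) :: real^3^3"
  have "penrose (Csel h {2} ** diagm d ** transpose (Csel h {2})) ?X"
    using e0 by (simp add: fvs field_simps; simp add: e algebra_simps power2_eq_square; algebra)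
  from Fval_by[OF this] have "Fval (Csel h {2}) d = h^2*d/e"
    using e0 by (simp add: fvs field_simps; simp add: e algebra_simps power2_eq_square; algebra)
  thus ?thesis using e by (simp add: power2_eq_square)
qed


lemma F12:
  assumes "h > 0" "d \<ge> 1"
  shows "Fval (Csel h {1,2}) d = h^2*d/(d + h^2)"
proof -
  obtain e where e: "e = d + h*h" by blast
  have e0: "e \<noteq> 0" using assms e by (smt (verit) zero_le_square)
  have h0: "h \<noteq> 0" using assms by simp
  let ?X = "(\<chi> i j. if i = 1 \<and> j = 1 then 1/(h*h) else if i = 1 \<and> j = 2 then -1/(h*h)
     else if i = 2 \<and> j = 1 then -1/(h*h) else if i = 2 \<and> j = 2 then 1/(h*h) + 1/e else 0) :: real^3^3"
  have "penrose (Csel h {1,2} ** diagm d ** transpose (Csel h {1,2})) ?X"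
    using e0 h0 by (simp add: fvs field_simps; simp add: e algebra_simps; algebra)
  from Fval_by[OF this] have "Fval (Csel h {1,2}) d = h*h*d/e"
    using e0 h0 by (simp add: fvs field_simps; simp add: e algebra_simps; algebra)
  thus ?thesis using e by (simp add: power2_eq_square)
qed


lemma F13:
  assumes "h > 0" "d \<ge> 1"
  shows "Fval (Csel h {1,3}) d = 0"
proof -
  let ?X = "(\<chi> i j. if i = 1 \<and> j = 1 then 1/d else if i = 1 \<and> j = 3 then -h/d
     else if i = 3 \<and> j = 1 then -h/d else if i = 3 \<and> j = 3 then (d + 2*(h*h))/(2*d) else 0) :: real^3^3"
  have "penrose (Csel h {1,3} ** diagm d ** transpose (Csel h {1,3})) ?X"
    using assms by (simp add: fvs field_simps power2_eq_square)
  from Fval_by[OF this] show ?thesis using assms by (simp add: fvs field_simps power2_eq_square)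
qed


lemma F23:
  assumes "h > 0" "d \<ge> 1"
  shows "Fval (Csel h {2,3}) d = h^2*d/(2*d + h^2)"
proof -
  obtain e where e: "e = 2*d + (h*h)" by blast
  have e0: "e \<noteq> 0" using assms e by (smt (verit) zero_le_square)
  let ?X = "(\<chi> i j. if i = 2 \<and> j = 2 then 2/e else if i = 2 \<and> j = 3 then -h/e
     else if i = 3 \<and> j = 2 then -h/e else if i = 3 \<and> j = 3 then (d + (h*h))/e else 0) :: real^3^3"
  have "penrose (Csel h {2,3} ** diagm d ** transpose (Csel h {2,3})) ?X"
    using e0 by (simp add: fvs field_simps; simp add: e algebra_simps power2_eq_square; algebra)
  from Fval_by[OF this] have "Fval (Csel h {2,3}) d = h^2*d/e"
    using e0 by (simp add: fvs field_simps; simp add: e algebra_simps power2_eq_square; algebra)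
  thus ?thesis using e by (simp add: power2_eq_square)
qed

definition phi :: "real \<Rightarrow> real \<Rightarrow> real \<Rightarrow> real" where "phi c a x = c*x/(a*x+c)"
definition Tm :: "real \<Rightarrow> real \<Rightarrow> real \<Rightarrow> real \<Rightarrow> real" where "Tm l c a x = 1 + l^2 * phi c a x"
definition fp :: "real \<Rightarrow> real \<Rightarrow> real \<Rightarrow> real" where "fp l c a = (THE x. 1 \<le> x \<and> Tm l c a x = x)"

lemma den_pos: "0 \<le> (c::real) \<Longrightarrow> 0 \<le> a \<Longrightarrow> 0 < a + c \<Longrightarrow> 1 \<le> x \<Longrightarrow> 0 < a*x + c"
proof -
  assume "0 \<le> c" "0 \<le> a" "0 < a + c" "1 \<le> x"
  hence "a * 1 \<le> a*x" using mult_left_mono[of 1 x a] by simp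
  thus ?thesis using \<open>0 < a + c\<close> by linarith
qed

lemma phi_nonneg: "0 \<le> c \<Longrightarrow> 0 \<le> a \<Longrightarrow> 0 < a + c \<Longrightarrow> 1 \<le> x \<Longrightarrow> 0 \<le> phi c a x"
  unfolding phi_def using den_pos by (simp add: divide_nonneg_pos)

lemma phi_le: "0 \<le> c \<Longrightarrow> 0 \<le> a \<Longrightarrow> 0 < a + c \<Longrightarrow> 1 \<le> x \<Longrightarrow> phi c a x \<le> x"
proof -
  assume as: "0 \<le> c" "0 \<le> a" "0 < a + c" "1 \<le> x"
  have p: "0 < a*x + c" using den_pos as by blast
  have "c*x \<le> x*(a*x+c)" using as by (simp add: algebra_simps)
  thus ?thesis unfolding phi_def using p by (simp add: divide_le_eq mult.commute)
qed

lemma phi_lip: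
  assumes "0 \<le> c" "0 \<le> a" "0 < a + c" "1 \<le> x" "1 \<le> y"
  shows "\<bar>phi c a x - phi c a y\<bar> \<le> \<bar>x - y\<bar>"
proof -
  have px: "0 < a*x + c" and py: "0 < a*y + c" using den_pos assms by blast+
  have eq: "phi c a x - phi c a y = c^2*(x-y)/((a*x+c)*(a*y+c))"
    unfolding phi_def using px py
    by (simp add: divide_simps power2_eq_square) (simp add: algebra_simps)
  have nn: "0 \<le> (a*x)*(a*y) + (a*x)*c + c*(a*y)"
    using assms by (intro add_nonneg_nonneg mult_nonneg_nonneg) auto
  have "(a*x+c)*(a*y+c) = (a*x)*(a*y) + (a*x)*c + c*(a*y) + c^2"
    by (simp add: algebra_simps power2_eq_square)
  hence "c^2 \<le> (a*x+c)*(a*y+c)" using nn by linarith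
  hence q: "c^2/((a*x+c)*(a*y+c)) \<le> 1" using px py by simp
  have "\<bar>phi c a x - phi c a y\<bar> = c^2/((a*x+c)*(a*y+c)) * \<bar>x - y\<bar>"
    unfolding eq using px py by (simp add: abs_mult abs_divide)
  also have "\<dots> \<le> 1 * \<bar>x - y\<bar>" using q by (intro mult_right_mono) auto
  finally show ?thesis by simp
qed

lemma Tm_lip:
  assumes "0 \<le> c" "0 \<le> a" "0 < a + c" "1 \<le> x" "1 \<le> y"
  shows "\<bar>Tm l c a x - Tm l c a y\<bar> \<le> l^2 * \<bar>x - y\<bar>"
proof -
  have "\<bar>Tm l c a x - Tm l c a y\<bar> = l^2 * \<bar>phi c a x - phi c a y\<bar>"
    unfolding Tm_def by (simp add: abs_mult flip: right_diff_distrib)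
  also have "\<dots> \<le> l^2 * \<bar>x - y\<bar>" using phi_lip[OF assms] by (simp add: mult_left_mono)
  finally show ?thesis .
qed

lemma Tm_ge1: "0 \<le> c \<Longrightarrow> 0 \<le> a \<Longrightarrow> 0 < a + c \<Longrightarrow> 1 \<le> x \<Longrightarrow> 1 \<le> Tm l c a x"
  unfolding Tm_def using phi_nonneg by simp

lemma fp_prop:
  assumes l: "\<bar>l\<bar> < 1" and ok: "0 \<le> c" "0 \<le> a" "0 < a + c"
  shows "1 \<le> fp l c a \<and> Tm l c a (fp l c a) = fp l c a"
proof -
  have l2: "l^2 < 1" using l by (simp add: abs_square_less_1)
  have "\<exists>!x\<in>{1..}. Tm l c a x = x"
  proof (rule Banach_fix[where c = "l^2"])
    show "complete {1::real..}" by (simp add: complete_eq_closed)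
    show "{1::real..} \<noteq> {}" by auto
    show "0 \<le> l^2" by simp
    show "l^2 < 1" by (rule l2)
    show "Tm l c a ` {1..} \<subseteq> {1..}" using Tm_ge1[OF ok] by auto
    show "dist (Tm l c a x) (Tm l c a y) \<le> l^2 * dist x y" if "x \<in> {1..}" "y \<in> {1..}" for x y
      using Tm_lip[OF ok] that by (simp add: dist_real_def)
  qed
  hence "\<exists>!x. 1 \<le> x \<and> Tm l c a x = x" by auto
  thus ?thesis unfolding fp_def by (rule theI')
qed

lemma iter_conv:
  assumes l: "\<bar>l\<bar> < 1" and ok: "0 \<le> c" "0 \<le> a" "0 < a + c"
    and u0: "1 \<le> u 0" and us: "\<And>k. u (Suc k) = Tm l c a (u k)"
  shows "u \<longlonglongrightarrow> fp l c a"
proof -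
  let ?p = "fp l c a"
  have p: "1 \<le> ?p" "Tm l c a ?p = ?p" using fp_prop[OF l ok] by auto
  have ge: "1 \<le> u k" for k by (induction k) (use u0 us Tm_ge1[OF ok] in auto)
  have bd: "\<bar>u k - ?p\<bar> \<le> (l^2)^k * \<bar>u 0 - ?p\<bar>" for k
  proof (induction k)
    case 0 then show ?case by simp
  next
    case (Suc k)
    have "\<bar>u (Suc k) - ?p\<bar> = \<bar>Tm l c a (u k) - Tm l c a ?p\<bar>" using us p by simp
    also have "\<dots> \<le> l^2 * \<bar>u k - ?p\<bar>" using Tm_lip[OF ok ge p(1)] .
    also have "\<dots> \<le> l^2 * ((l^2)^k * \<bar>u 0 - ?p\<bar>)" using Suc by (simp add: mult_left_mono)
    finally show ?case by simp
  qed
  have l2: "norm (l^2) < 1" using l by (simp add: abs_square_less_1)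
  have "(\<lambda>k. (l^2)^k * \<bar>u 0 - ?p\<bar>) \<longlonglongrightarrow> 0 * \<bar>u 0 - ?p\<bar>"
    by (intro tendsto_mult LIMSEQ_power_zero l2 tendsto_const)
  hence g0: "(\<lambda>k. (l^2)^k * \<bar>u 0 - ?p\<bar>) \<longlonglongrightarrow> 0" by simp
  have ev: "eventually (\<lambda>k. norm (u k - ?p) \<le> (l^2)^k * \<bar>u 0 - ?p\<bar>) sequentially"
    by (intro always_eventually allI) (simp add: bd)
  have "(\<lambda>k. u k - ?p) \<longlonglongrightarrow> 0" by (rule Lim_null_comparison[OF ev g0])
  thus ?thesis by (simp add: Lim_null[symmetric])
qed

lemma diagm11[simp]: "diagm d $ 1 $ 1 = d" by (simp add: diagm_def)

lemma kf_seq: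
  fixes C :: "real^3^3"
  assumes P0: "psd P0"
  shows "\<exists>u. 1 \<le> u 0 \<and> (\<forall>k. u (Suc k) = 1 + l^2 * Fval C (u k)) \<and>
             (\<forall>k. kf_cov (Aex l) (mat 1) C P0 (Suc k) = diagm (u k))"
proof -
  define q where "q P = (P - P ** transpose C ** pinv (C ** P ** transpose C) ** C ** P)$1$1" for P :: "real^3^3"
  define u where "u k = 1 + l^2 * q (kf_cov (Aex l) (mat 1) C P0 k)" for k
  have K: "kf_cov (Aex l) (mat 1) C P0 (Suc k) = diagm (u k)" for k
    by (simp add: u_def q_def riccati_form)
  have "u (Suc k) = 1 + l^2 * Fval C (u k)" for k
    unfolding u_def[of "Suc k"] K[of k, folded u_def] by (simp add: q_def Fval_def u_def)
  moreover have "1 \<le> u 0" unfolding u_def q_def using gain_nonneg[OF P0, of C] by simp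
  ultimately show ?thesis using K by blast
qed

lemma diagm_lin: "diagm v = mat 1 + (v - 1) *\<^sub>R (\<chi> i j. if i = 1 \<and> j = 1 then 1 else 0)"
  by (simp add: vec_eq_iff forall_3 diagm_def mat_def)

lemma psd0: "psd (0::real^3^3)" by (simp add: psd_def transpose_def vec_eq_iff)

lemma Sig_lim:
  fixes C :: "real^3^3"
  assumes l: "\<bar>l\<bar> < 1" and ok: "0 \<le> c" "0 \<le> a" "0 < a + c"
    and F: "\<And>d. 1 \<le> d \<Longrightarrow> Fval C d = phi c a d"
  shows "kf_lim (Aex l) (mat 1) C = diagm (fp l c a)"
proof -
  have conv: "kf_cov (Aex l) (mat 1) C P0 \<longlonglongrightarrow> diagm (fp l c a)" if P0: "psd P0" for P0
  proof -
    obtain u where u0: "1 \<le> u 0" and us: "\<And>k. u (Suc k) = 1 + l^2 * Fval C (u k)"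
      and K: "\<And>k. kf_cov (Aex l) (mat 1) C P0 (Suc k) = diagm (u k)"
      using kf_seq[OF P0, where C=C and l=l] by blast
    have ge: "1 \<le> u k" for k
    proof (induction k)
      case 0 then show ?case by (rule u0)
    next
      case (Suc k) then show ?case using us[of k] F[of "u k"] phi_nonneg[OF ok Suc] by simp
    qed
    have us': "u (Suc k) = Tm l c a (u k)" for k using us[of k] F[OF ge[of k]] by (simp add: Tm_def)
    have "u \<longlonglongrightarrow> fp l c a" by (rule iter_conv[OF l ok u0 us'])
    hence "(\<lambda>k. diagm (u k)) \<longlonglongrightarrow> diagm (fp l c a)"
      unfolding diagm_lin by (intro tendsto_intros)
    hence "(\<lambda>k. kf_cov (Aex l) (mat 1) C P0 (Suc k)) \<longlonglongrightarrow> diagm (fp l c a)" by (simp only: K)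
    thus ?thesis by (simp only: filterlim_sequentially_Suc)
  qed
  show ?thesis unfolding kf_lim_def
  proof (rule the_equality)
    show "\<forall>P0. psd P0 \<longrightarrow> kf_cov (Aex l) (mat 1) C P0 \<longlonglongrightarrow> diagm (fp l c a)" using conv by blast
    fix L assume "\<forall>P0. psd P0 \<longrightarrow> kf_cov (Aex l) (mat 1) C P0 \<longlonglongrightarrow> L"
    hence "kf_cov (Aex l) (mat 1) C 0 \<longlonglongrightarrow> L" using psd0 by blast
    thus "L = diagm (fp l c a)" using conv[OF psd0] by (rule LIMSEQ_unique)
  qed
qed

lemma fp_eq:
  assumes l: "\<bar>l\<bar> < 1" and ok: "0 \<le> c" "0 \<le> a" "0 < a + c"
    and x: "1 \<le> x" "Tm l c a x = x"
  shows "fp l c a = x"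
proof -
  let ?p = "fp l c a"
  have p: "1 \<le> ?p" "Tm l c a ?p = ?p" using fp_prop[OF l ok] by auto
  have "\<bar>x - ?p\<bar> \<le> l^2 * \<bar>x - ?p\<bar>" using Tm_lip[OF ok x(1) p(1), of l] x p by simp
  moreover have "l^2 < 1" using l by (simp add: abs_square_less_1)
  ultimately have "(1 - l^2) * \<bar>x - ?p\<bar> \<le> 0" "0 < 1 - l^2" by (auto simp: algebra_simps)
  hence "\<bar>x - ?p\<bar> \<le> 0" by (simp add: mult_le_0_iff)
  thus ?thesis by simp
qed

lemma fp_less:
  assumes l: "\<bar>l\<bar> < 1" "l \<noteq> 0" and ok1: "0 \<le> c1" "0 \<le> a1" "0 < a1 + c1"
    and ok2: "0 \<le> c2" "0 \<le> a2" "0 < a2 + c2"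
    and lt: "phi c1 a1 (fp l c1 a1) < phi c2 a2 (fp l c1 a1)"
  shows "fp l c1 a1 < fp l c2 a2"
proof (rule ccontr)
  let ?s = "fp l c1 a1" and ?b = "fp l c2 a2"
  assume "\<not> ?s < ?b"
  hence le: "?b \<le> ?s" by simp
  have s: "1 \<le> ?s" "Tm l c1 a1 ?s = ?s" using fp_prop[OF l(1) ok1] by auto
  have b: "1 \<le> ?b" "Tm l c2 a2 ?b = ?b" using fp_prop[OF l(1) ok2] by auto
  have l2: "0 < l^2" "l^2 < 1" using l by (auto simp: abs_square_less_1)
  have "l^2 * phi c1 a1 ?s < l^2 * phi c2 a2 ?s" using lt l2(1) by simp
  hence "?s < Tm l c2 a2 ?s" using s(2) unfolding Tm_def by linarith
  hence "?s - ?b < Tm l c2 a2 ?s - Tm l c2 a2 ?b" using b(2) by simp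
  also have "\<dots> \<le> l^2 * \<bar>?s - ?b\<bar>" using Tm_lip[OF ok2 s(1) b(1), of l] by simp
  also have "\<dots> = l^2 * (?s - ?b)" using le by simp
  finally have "(1 - l^2) * (?s - ?b) < 0" by (simp add: algebra_simps)
  moreover have "0 \<le> (1 - l^2) * (?s - ?b)" using le l2 by simp
  ultimately show False by simp
qed

lemma sc_TTT: "1 \<in> S \<Longrightarrow> 2 \<in> S \<Longrightarrow> 3 \<in> S \<Longrightarrow> (S::3 set) = UNIV"
  apply (rule set_eqI)
  subgoal for x using exhaust_3[of x] by auto
  done

lemma sc_TTF: "1 \<in> S \<Longrightarrow> 2 \<in> S \<Longrightarrow> 3 \<notin> S \<Longrightarrow> (S::3 set) = {1,2}"
  apply (rule set_eqI)
  subgoal for x using exhaust_3[of x] by auto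
  done

lemma sc_TFT: "1 \<in> S \<Longrightarrow> 2 \<notin> S \<Longrightarrow> 3 \<in> S \<Longrightarrow> (S::3 set) = {1,3}"
  apply (rule set_eqI)
  subgoal for x using exhaust_3[of x] by auto
  done

lemma sc_TFF: "1 \<in> S \<Longrightarrow> 2 \<notin> S \<Longrightarrow> 3 \<notin> S \<Longrightarrow> (S::3 set) = {1}"
  apply (rule set_eqI)
  subgoal for x using exhaust_3[of x] by auto
  done

lemma sc_FTT: "1 \<notin> S \<Longrightarrow> 2 \<in> S \<Longrightarrow> 3 \<in> S \<Longrightarrow> (S::3 set) = {2,3}"
  apply (rule set_eqI)
  subgoal for x using exhaust_3[of x] by auto
  done

lemma sc_FTF: "1 \<notin> S \<Longrightarrow> 2 \<in> S \<Longrightarrow> 3 \<notin> S \<Longrightarrow> (S::3 set) = {2}"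
  apply (rule set_eqI)
  subgoal for x using exhaust_3[of x] by auto
  done

lemma sc_FFT: "1 \<notin> S \<Longrightarrow> 2 \<notin> S \<Longrightarrow> 3 \<in> S \<Longrightarrow> (S::3 set) = {3}"
  apply (rule set_eqI)
  subgoal for x using exhaust_3[of x] by auto
  done

lemma sc_FFF: "1 \<notin> S \<Longrightarrow> 2 \<notin> S \<Longrightarrow> 3 \<notin> S \<Longrightarrow> (S::3 set) = {}"
  apply (rule set_eqI)
  subgoal for x using exhaust_3[of x] by auto
  done

lemma sets3: "(S::3 set) = {} \<or> S = {1} \<or> S = {2} \<or> S = {3} \<or> S = {1,2} \<or> S = {1,3} \<or> S = {2,3} \<or> S = UNIV"
  apply (cases "1 \<in> S"; cases "2 \<in> S"; cases "3 \<in> S")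
  subgoal using sc_TTT by blast
  subgoal using sc_TTF by blast
  subgoal using sc_TFT by blast
  subgoal using sc_TFF by blast
  subgoal using sc_FTT by blast
  subgoal using sc_FTF by blast
  subgoal using sc_FFT by blast
  subgoal using sc_FFF by blast
  done

lemma card_UNIV3: "card (UNIV :: 3 set) = 3" by simp

lemma trace_diagm: "trace (diagm v) = v + 2"
  by (simp add: trace_def sum_3 diagm_def)

lemma ok_h: "0 < h \<Longrightarrow> 0 < (h::real)^2" by simp

lemma Sig_vals:
  assumes l: "\<bar>l\<bar> < 1" and h: "0 < h"
  shows "Sig l h {} = diagm (fp l 1 0)"
    and "Sig l h {3} = diagm (fp l 1 0)"
    and "Sig l h {1} = diagm (fp l (2*h^2) 1)"
    and "Sig l h {2} = diagm (fp l (h^2) 1)"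
    and "Sig l h {1,2} = diagm (fp l (h^2) 1)"
    and "Sig l h {1,3} = diagm (fp l 0 1)"
    and "Sig l h {2,3} = diagm (fp l (h^2) 2)"
proof -
  have k: "0 < h^2" using h by simp
  have k2: "0 < 1 + 2*h^2" "0 < 1 + h^2" "0 < 2 + h^2" using k by linarith+
  show "Sig l h {} = diagm (fp l 1 0)" unfolding Sig_def
    by (rule Sig_lim[OF l]) (auto simp: F0 phi_def)
  show "Sig l h {3} = diagm (fp l 1 0)" unfolding Sig_def
    by (rule Sig_lim[OF l]) (auto simp: F3 phi_def)
  show "Sig l h {1} = diagm (fp l (2*h^2) 1)" unfolding Sig_def
    by (rule Sig_lim[OF l]) (use k k2 in \<open>auto simp: F1[OF h] phi_def\<close>)
  show "Sig l h {2} = diagm (fp l (h^2) 1)" unfolding Sig_def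
    by (rule Sig_lim[OF l]) (use k k2 in \<open>auto simp: F2[OF h] phi_def\<close>)
  show "Sig l h {1,2} = diagm (fp l (h^2) 1)" unfolding Sig_def
    by (rule Sig_lim[OF l]) (use k k2 in \<open>auto simp: F12[OF h] phi_def\<close>)
  show "Sig l h {1,3} = diagm (fp l 0 1)" unfolding Sig_def
    by (rule Sig_lim[OF l]) (use k k2 in \<open>auto simp: F13[OF h] phi_def\<close>)
  show "Sig l h {2,3} = diagm (fp l (h^2) 2)" unfolding Sig_def
    by (rule Sig_lim[OF l]) (use k k2 in \<open>auto simp: F23[OF h] phi_def\<close>)
qed

lemma fp01: "\<bar>l\<bar> < 1 \<Longrightarrow> fp l 0 1 = 1"
  by (rule fp_eq) (auto simp: Tm_def phi_def)

lemma ineq1: "0 < (k::real) \<Longrightarrow> 1 \<le> d \<Longrightarrow> phi k 1 d < phi (2*k) 1 d"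
proof -
  assume k: "0 < k" and d: "1 \<le> d"
  have p1: "0 < d + k" "0 < d + 2*k" using k d by auto
  have "k*d*(d + 2*k) < 2*k*d*(d+k)"
  proof -
    have "0 < k*d*d" using k d by simp
    thus ?thesis by (simp add: algebra_simps)
  qed
  thus ?thesis unfolding phi_def using p1 by (simp add: divide_simps)
qed

lemma ineq2: "0 < (k::real) \<Longrightarrow> 1 \<le> d \<Longrightarrow> phi k 1 d < phi 1 0 d"
proof -
  assume k: "0 < k" and d: "1 \<le> d"
  have p1: "0 < d + k" using k d by auto
  have "k*d < d*(d+k)"
  proof -
    have "0 < d*d" using d by simp
    thus ?thesis by (simp add: algebra_simps)
  qed
  thus ?thesis unfolding phi_def using p1 by (simp add: divide_simps)
qed

lemma ineq3: "0 < (k::real) \<Longrightarrow> 1 \<le> d \<Longrightarrow> phi k 2 d < phi k 1 d"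
proof -
  assume k: "0 < k" and d: "1 \<le> d"
  have p1: "0 < d + k" "0 < 2*d + k" using k d by auto
  have "k*d*(d + k) < k*d*(2*d+k)"
  proof -
    have "0 < k*d*d" using k d by simp
    thus ?thesis by (simp add: algebra_simps)
  qed
  thus ?thesis unfolding phi_def using p1 by (simp add: divide_simps)
qed

lemma fp_bounds:
  assumes l: "\<bar>l\<bar> < 1" and k: "0 < (k::real)"
  defines "D \<equiv> 1/(1-l^2)"
  shows "fp l k 2 \<le> D" "D - 2*l^2*D^3/k \<le> fp l k 2"
proof -
  let ?p = "fp l k 2"
  have ok: "0 \<le> k" "0 \<le> (2::real)" "0 < 2 + k" using k by auto
  have p: "1 \<le> ?p" "Tm l k 2 ?p = ?p" using fp_prop[OF l ok] by auto
  have l2: "0 \<le> l^2" "l^2 < 1" using l by (auto simp: abs_square_less_1)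
  have pe: "?p = 1 + l^2 * phi k 2 ?p" using p(2) unfolding Tm_def by simp
  have "phi k 2 ?p \<le> ?p" by (rule phi_le[OF ok p(1)])
  hence "l^2 * phi k 2 ?p \<le> l^2 * ?p" using l2 by (simp add: mult_left_mono)
  hence "(1 - l^2) * ?p \<le> 1" using pe by (simp add: algebra_simps)
  thus pD: "?p \<le> D" unfolding D_def using l2 by (simp add: pos_le_divide_eq mult.commute)
  have den: "0 < 2 * ?p + k" using p k by linarith
  have ph: "phi k 2 ?p = ?p - 2*?p^2/(2*?p+k)"
    unfolding phi_def using den by (simp add: field_simps power2_eq_square)
  have "2*?p^2/(2*?p+k) \<le> 2*?p^2/k"
    using den k p by (intro divide_left_mono) auto
  also have "\<dots> \<le> 2*D^2/k"
  proof -
    have "?p^2 \<le> D^2" using pD p by (intro power_mono) auto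
    thus ?thesis using k by (simp add: divide_right_mono)
  qed
  finally have b: "2*?p^2/(2*?p+k) \<le> 2*D^2/k" .
  hence "l^2 * (2*?p^2/(2*?p+k)) \<le> l^2 * (2*D^2/k)" using l2(1) by (rule mult_left_mono)
  hence "(1 - l^2) * ?p \<ge> 1 - l^2 * (2*D^2/k)" using pe ph by (simp add: algebra_simps)
  hence "?p \<ge> (1 - l^2 * (2*D^2/k)) / (1 - l^2)" using l2 by (simp add: pos_divide_le_eq mult.commute)
  moreover have "(1 - l^2 * (2*D^2/k)) / (1 - l^2) = D - 2*l^2*D^3/k"
  proof -
    obtain e where e: "e = 1 - l^2" by blast
    have e0: "e \<noteq> 0" using e l2 by simp
    obtain m where m: "m = l^2" by blast
    have "(1 - m * (2*(1/e)^2/k)) / e = 1/e - 2*m*(1/e)^3/k"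
      using e0 k by (simp add: field_simps power2_eq_square power3_eq_cube)
    thus ?thesis unfolding D_def e m .
  qed
  ultimately show "D - 2*l^2*D^3/k \<le> ?p" by simp
qed

lemma greedy2:
  assumes "greedy_res f 2 T"
  shows "\<exists>j0 j. T = insert j {j0} \<and> j \<noteq> j0 \<and> (\<forall>j'. f {j0} \<le> f {j'}) \<and>
                (\<forall>j'. j' \<noteq> j0 \<longrightarrow> f (insert j {j0}) \<le> f (insert j' {j0}))"
proof -
  from assms have "greedy_res f (Suc (Suc 0)) T" by (simp add: numeral_2_eq_2)
  then obtain S j where T: "T = insert j S" and G1: "greedy_res f (Suc 0) S" and j: "j \<notin> S"
      and mj: "\<forall>j'. j' \<notin> S \<longrightarrow> f (insert j S) \<le> f (insert j' S)"
    by (cases rule: greedy_res.cases) auto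
  from G1 obtain S0 j0 where S: "S = insert j0 S0" and G0: "greedy_res f 0 S0"
      and mj0: "\<forall>j'. j' \<notin> S0 \<longrightarrow> f (insert j0 S0) \<le> f (insert j' S0)"
    by (cases rule: greedy_res.cases) auto
  from G0 have "S0 = {}" by (cases rule: greedy_res.cases) auto
  thus ?thesis using T S j mj mj0 by auto
qed

lemma fp_tendsto:
  assumes l: "\<bar>l\<bar> < 1"
  shows "((\<lambda>h. fp l (h^2) 2) \<longlongrightarrow> 1/(1-l^2)) at_top"
proof -
  define D where "D = 1/(1-l^2)"
  have ev: "eventually (\<lambda>h::real. 0 < h) at_top" by (rule eventually_gt_at_top)
  have lo: "eventually (\<lambda>h. D - 2*l^2*D^3/h^2 \<le> fp l (h^2) 2) at_top"
    using ev by eventually_elim (use fp_bounds(2)[OF l] in \<open>simp add: D_def\<close>)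
  have up: "eventually (\<lambda>h. fp l (h^2) 2 \<le> D) at_top"
    using ev by eventually_elim (use fp_bounds(1)[OF l] in \<open>simp add: D_def\<close>)
  have sq: "LIM h at_top. (h::real)^2 :> at_infinity"
    by (intro filterlim_at_top_imp_at_infinity filterlim_pow_at_top filterlim_ident) auto
  have "((\<lambda>h. 2*l^2*D^3/h^2) \<longlongrightarrow> 0) at_top"
    by (rule tendsto_divide_0[OF tendsto_const sq])
  hence "((\<lambda>h. D - 2*l^2*D^3/h^2) \<longlongrightarrow> D - 0) at_top"
    by (intro tendsto_diff tendsto_const)
  hence "((\<lambda>h. D - 2*l^2*D^3/h^2) \<longlongrightarrow> D) at_top" by simp
  from tendsto_sandwich[OF lo up this tendsto_const]
  show ?thesis unfolding D_def .
qed

lemma main_h: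
  fixes l :: real and h :: real and T :: "3 set"
  assumes l: "0 < \<bar>l\<bar>" "\<bar>l\<bar> < 1" and h: "0 < h"
    and G: "greedy_res (\<lambda>S. trace (Sig l h S)) 2 T"
  shows "trace (Sig l h T) / Min {trace (Sig l h S) | S. card S \<le> 2} = (fp l (h^2) 2 + 2) / 3"
proof -
  let ?f = "\<lambda>S. trace (Sig l h S)"
  have l0: "l \<noteq> 0" using l by auto
  have k: "0 < h^2" "0 < 2*h^2" using h by auto
  note SV = Sig_vals[OF l(2) h]
  have okk: "0 \<le> h^2" "0 \<le> (1::real)" "0 < 1 + h^2" using k by linarith+
  have ok2k: "0 \<le> 2*h^2" "0 \<le> (1::real)" "0 < 1 + 2*h^2" using k by linarith+
  have ok10: "0 \<le> (1::real)" "0 \<le> (0::real)" "0 < (0::real) + 1" by auto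
  have okk2: "0 \<le> h^2" "0 \<le> (2::real)" "0 < 2 + h^2" using k by linarith+
  have fp1: "1 \<le> fp l (h^2) 1" using fp_prop[OF l(2) okk] by auto
  have fp2: "1 \<le> fp l (2*h^2) 1" using fp_prop[OF l(2) ok2k] by auto
  have fp3: "1 \<le> fp l 1 0" using fp_prop[OF l(2) ok10] by auto
  have fp4: "1 \<le> fp l (h^2) 2" using fp_prop[OF l(2) okk2] by auto
  have c1: "fp l (h^2) 1 < fp l (2*h^2) 1"
    by (rule fp_less[OF l(2) l0 okk ok2k]) (use ineq1[OF k(1) fp1] in simp)
  have c2: "fp l (h^2) 1 < fp l 1 0"
    by (rule fp_less[OF l(2) l0 okk ok10]) (use ineq2[OF k(1) fp1] in simp)
  have c3: "fp l (h^2) 2 < fp l (h^2) 1"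
    by (rule fp_less[OF l(2) l0 okk2 okk]) (use ineq3[OF k(1) fp4] in simp)
  have t: "?f {} = fp l 1 0 + 2" "?f {3} = fp l 1 0 + 2" "?f {1} = fp l (2*h^2) 1 + 2"
    "?f {2} = fp l (h^2) 1 + 2" "?f {1,2} = fp l (h^2) 1 + 2" "?f {1,3} = 3"
    "?f {2,3} = fp l (h^2) 2 + 2"
    by (simp_all add: SV trace_diagm fp01[OF l(2)])
  have t32: "?f {3,2} = fp l (h^2) 2 + 2" using t(7) by (simp add: insert_commute)
  obtain j0 j where T: "T = insert j {j0}" and jj: "j \<noteq> j0" and m0: "\<forall>j'. ?f {j0} \<le> ?f {j'}"
    and m1: "\<forall>j'. j' \<noteq> j0 \<longrightarrow> ?f (insert j {j0}) \<le> ?f (insert j' {j0})"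
    using greedy2[OF G] by blast
  have j0: "j0 = 2"
  proof -
    have "j0 \<noteq> 1" using m0[rule_format, of 2] t c1 by auto
    moreover have "j0 \<noteq> 3" using m0[rule_format, of 2] t c2 by auto
    ultimately show ?thesis using exhaust_3[of j0] by auto
  qed
  have j: "j = 3"
  proof -
    have "j \<noteq> 1" using m1[rule_format, of 3] t t32 c3 j0 by auto
    thus ?thesis using exhaust_3[of j] jj j0 by auto
  qed
  have fT: "?f T = fp l (h^2) 2 + 2" using T j0 j t32 by simp
  have fin: "finite {trace (Sig l h S) | S. card S \<le> 2}"
  proof -
    have "{trace (Sig l h S) | S. card S \<le> 2} = ?f ` {S. card S \<le> 2}" by auto
    thus ?thesis by simp
  qed
  have lb: "3 \<le> y" if ymem: "y \<in> {trace (Sig l h S) | S. card S \<le> 2}" for y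
  proof -
    obtain S where y: "y = ?f S" and cS: "card S \<le> 2" using ymem by blast
    have "S \<noteq> UNIV" using cS card_UNIV3 by auto
    thus ?thesis using sets3[of S] y t fp1 fp2 fp3 fp4 by auto
  qed
  have mem: "3 \<in> {trace (Sig l h S) | S. card S \<le> 2}"
  proof -
    have "card {1,3::3} = 2" by simp
    hence "card {1,3::3} \<le> 2" by simp
    hence "3 = trace (Sig l h {1,3}) \<and> card {1,3::3} \<le> 2" using t(6) by simp
    thus ?thesis by blast
  qed
  have "Min {trace (Sig l h S) | S. card S \<le> 2} = 3" by (rule Min_eqI[OF fin lb mem])
  thus ?thesis using fT by simp
qed

theorem theorem3:
  fixes l1 :: real and g :: "real \<Rightarrow> 3 set"
  assumes "0 < \<bar>l1\<bar>" and "\<bar>l1\<bar> < 1"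
    and "\<forall>h>0. greedy_res (\<lambda>S. trace (Sig l1 h S)) 2 (g h)"
  shows "((\<lambda>h. trace (Sig l1 h (g h)) / Min {trace (Sig l1 h S) | S. card S \<le> 2})
           \<longlongrightarrow> 2/3 + 1 / (3 * (1 - l1^2))) at_top"
proof -
  have ev: "eventually (\<lambda>h. trace (Sig l1 h (g h)) / Min {trace (Sig l1 h S) | S. card S \<le> 2}
       = (fp l1 (h^2) 2 + 2) / 3) at_top"
    using eventually_gt_at_top[of "0::real"]
    by eventually_elim (use main_h[OF assms(1,2)] assms(3) in auto)
  have "((\<lambda>h. (fp l1 (h^2) 2 + 2) / 3) \<longlongrightarrow> (1/(1-l1^2) + 2) / 3) at_top"
    by (intro tendsto_intros fp_tendsto[OF assms(2)]) simp
  moreover have "(1/(1-l1^2) + 2) / 3 = 2/3 + 1 / (3 * (1 - l1^2))"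
  proof -
    have "l1^2 < 1" using assms(2) by (simp add: abs_square_less_1)
    hence "1 - l1^2 \<noteq> 0" by simp
    thus ?thesis by (simp add: field_simps)
  qed
  ultimately have "((\<lambda>h. (fp l1 (h^2) 2 + 2) / 3) \<longlongrightarrow> 2/3 + 1 / (3 * (1 - l1^2))) at_top" by simp
  thus ?thesis using tendsto_cong[OF ev] by simp
qed

end
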